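(* For $\tau,t\in\mathbb{R}$ and integer $n\ge0$ let $$\mu_{2n}(\tau,t)=\int_{-\infty}^{\infty}x^{2n}\exp(-x^6+\tau x^4+tx^2)\,dx.$$ Then $$\frac{\partial^2\mu_{2n}}{\partial\tau\,\partial t}-\tfrac23\tau\frac{\partial\mu_{2n}}{\partial\tau}-\tfrac13t\frac{\partial\mu_{2n}}{\partial t}-\tfrac16(2n+1)\mu_{2n}=0.$$ *)

theory Defs
  imports "HOL-Analysis.Analysis"
begin

definition mu :: "nat \<Rightarrow> real \<Rightarrow> real \<Rightarrow> real" where
  "mu n \<tau> t = (\<integral>x. x ^ (2 * n) * exp (- (x ^ 6) + \<tau> * x ^ 4 + t * x ^ 2) \<partial>lborel)"

end

theory Submission
  imports Defs "HOL-Probability.Sinc_Integral" "HOL-Real_Asymp.Real_Asymp"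
begin

lemma exp_taylor2_bound:
  fixes y :: real
  shows "\<bar>exp y - 1 - y\<bar> \<le> y^2 * exp \<bar>y\<bar>"
proof -
  obtain t where t: "\<bar>t\<bar> \<le> \<bar>y\<bar>" "exp y = (\<Sum>m<2. (y ^ m) / fact m) + (exp t / fact 2) * y ^ 2"
    using Maclaurin_exp_le[of y 2] by blast
  have h: "exp y - 1 - y = exp t / 2 * y^2" using t(2) by (simp add: numeral_2_eq_2)
  have "exp t \<le> exp \<bar>y\<bar>" using t(1) by simp
  have "0 \<le> exp t / 2 * y^2" by simp
  hence "\<bar>exp y - 1 - y\<bar> = exp t / 2 * y^2" unfolding h by (rule abs_of_nonneg)
  also have "\<dots> \<le> exp t * y^2" by (intro mult_right_mono) auto
  also have "\<dots> \<le> exp \<bar>y\<bar> * y^2" using \<open>exp t \<le> exp \<bar>y\<bar>\<close> by (intro mult_right_mono) auto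
  also have "\<dots> = y^2 * exp \<bar>y\<bar>" by (rule mult.commute)
  finally show ?thesis .
qed

lemma poly_bound:
  fixes A B y :: real
  assumes "0 \<le> A" "0 \<le> B" "0 \<le> y"
  shows "A*y^2 + B*y - y^3 \<le> A*(A+B+1)^2 + B*(A+B+1)"
proof (cases "y \<le> A+B+1")
  case True
  have "A*y^2 \<le> A*(A+B+1)^2" using True assms by (intro mult_left_mono power_mono) auto
  moreover have "B*y \<le> B*(A+B+1)" using True assms by (intro mult_left_mono) auto
  moreover have "0 \<le> y^3" using assms by simp
  ultimately show ?thesis by linarith
next
  case False
  have "y^3 = y * y^2" by (simp add: power2_eq_square power3_eq_cube)
  also have "\<dots> \<ge> (A+B+1) * y^2" using False by (intro mult_right_mono) auto
  finally have 1: "y^3 \<ge> (A+B+1) * y^2" .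
  have "y \<le> y^2" using False assms by (simp add: power2_eq_square)
  hence "B*y \<le> B*y^2" using assms by (intro mult_left_mono) auto
  moreover have "(A+B+1)*y^2 = A*y^2 + B*y^2 + y^2" by (simp add: algebra_simps)
  ultimately have "A*y^2 + B*y - y^3 \<le> 0" using 1 zero_le_power2[of y] by linarith
  moreover have "0 \<le> A*(A+B+1)^2 + B*(A+B+1)" using assms by simp
  ultimately show ?thesis by linarith
qed

definition P :: "real \<Rightarrow> real \<Rightarrow> real \<Rightarrow> real" where
  "P a b x = - (x ^ 6) + a * x ^ 4 + b * x ^ 2"

lemma key_bound:
  fixes x a b :: real and k :: nat
  defines "A \<equiv> \<bar>a\<bar>" and "B \<equiv> \<bar>b\<bar> + real k + 1"
  shows "\<bar>x\<bar>^k * exp (P a b x) \<le> exp (A*(A+B+1)^2 + B*(A+B+1)) * inverse (1 + x^2)"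
proof -
  define y where "y = x^2"
  have y0: "0 \<le> y" by (simp add: y_def)
  have x4: "x^4 = y^2" and x6: "x^6 = y^3" by (simp_all add: y_def flip: power_mult)
  have Pe: "P a b x = a*y^2 + b*y - y^3" unfolding P_def x4 x6 y_def by simp
  have ax: "\<bar>x\<bar> \<le> 1 + x^2"
  proof (cases "\<bar>x\<bar> \<le> 1")
    case False
    hence "\<bar>x\<bar> \<le> \<bar>x\<bar> * \<bar>x\<bar>" by (intro mult_le_cancel_left1[THEN iffD2]) auto
    also have "\<dots> = x^2" by (simp add: power2_eq_square abs_mult_self)
    finally show ?thesis by linarith
  qed (use zero_le_power2[of x] in linarith)
  hence "\<bar>x\<bar>^k \<le> (1+x^2)^k" by (intro power_mono) auto
  hence "(1+x^2) * \<bar>x\<bar>^k \<le> (1+x^2) * (1+x^2)^k" by (intro mult_left_mono) auto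
  also have "\<dots> = (1+x^2)^(k+1)" by simp
  also have "\<dots> \<le> exp (x^2) ^ (k+1)" by (intro power_mono) (auto simp: add.commute exp_ge_add_one_self)
  also have "\<dots> = exp (real (k+1) * x^2)" by (rule exp_of_nat_mult[symmetric])
  also have "\<dots> = exp ((real k + 1) * x^2)" by simp
  finally have 1: "(1+x^2) * \<bar>x\<bar>^k \<le> exp ((real k + 1) * x^2)" .
  have "a*y^2 \<le> A*y^2" unfolding A_def by (intro mult_right_mono) auto
  moreover have "b*y \<le> \<bar>b\<bar>*y" using y0 by (intro mult_right_mono) auto
  ultimately have "(real k + 1) * x^2 + P a b x \<le> A*y^2 + B*y - y^3"
    unfolding Pe B_def by (simp add: y_def algebra_simps)
  also have "\<dots> \<le> A*(A+B+1)^2 + B*(A+B+1)" using y0 by (intro poly_bound) (auto simp: A_def B_def)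
  finally have 2: "(real k + 1) * x^2 + P a b x \<le> A*(A+B+1)^2 + B*(A+B+1)" .
  define E where "E = exp (A*(A+B+1)^2 + B*(A+B+1))"
  have "(1+x^2) * (\<bar>x\<bar>^k * exp (P a b x)) = ((1+x^2) * \<bar>x\<bar>^k) * exp (P a b x)" by simp
  also have "\<dots> \<le> exp ((real k + 1) * x^2) * exp (P a b x)"
    using 1 by (intro mult_right_mono) auto
  also have "\<dots> = exp ((real k + 1) * x^2 + P a b x)" by (simp add: exp_add)
  also have "\<dots> \<le> E" using 2 unfolding E_def by simp
  finally have 3: "(1+x^2) * (\<bar>x\<bar>^k * exp (P a b x)) \<le> E" .
  have pos: "0 < 1 + x^2" by (simp add: add_pos_nonneg)
  have "\<bar>x\<bar>^k * exp (P a b x) = ((1+x^2) * (\<bar>x\<bar>^k * exp (P a b x))) / (1+x^2)"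
    using pos by simp
  also have "\<dots> \<le> E / (1+x^2)" using 3 pos by (intro divide_right_mono) auto
  finally show ?thesis unfolding E_def by (simp add: divide_inverse)
qed

lemma integrable_inv: "integrable lborel (\<lambda>x::real. inverse (1 + x^2))"
  using integrable_inverse_1_plus_square by (simp add: set_integrable_def)

lemma meas_P[measurable]: "(\<lambda>x. P a b x) \<in> borel_measurable borel"
  unfolding P_def by measurable

lemma integrable_abs_E: "integrable lborel (\<lambda>x. \<bar>x\<bar>^k * exp (P a b x))"
proof -
  define A where "A = \<bar>a\<bar>"
  define B where "B = \<bar>b\<bar> + real k + 1"
  define c where "c = exp (A*(A+B+1)^2 + B*(A+B+1))"
  have i: "integrable lborel (\<lambda>x. c * inverse (1 + x^2))"
    by (rule integrable_mult_right[OF integrable_inv])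
  have m: "(\<lambda>x. \<bar>x\<bar>^k * exp (P a b x)) \<in> borel_measurable lborel" by measurable
  have le: "\<bar>x\<bar>^k * exp (P a b x) \<le> c * inverse (1 + x^2)" for x
    using key_bound[of x k a b] unfolding c_def A_def B_def by simp
  have "norm (\<bar>x\<bar>^k * exp (P a b x)) \<le> norm (c * inverse (1 + x^2))" for x :: real
  proof -
    have "norm (\<bar>x\<bar>^k * exp (P a b x)) = \<bar>x\<bar>^k * exp (P a b x)" by simp
    also have "\<dots> \<le> c * inverse (1 + x^2)" by (rule le)
    also have "\<dots> \<le> norm (c * inverse (1 + x^2))" by (metis real_norm_def abs_ge_self)
    finally show ?thesis .
  qed
  then show ?thesis by (intro Bochner_Integration.integrable_bound[OF i m] AE_I2)
qed

lemma integrable_E: "integrable lborel (\<lambda>x. x^k * exp (P a b x))"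
proof -
  have m: "(\<lambda>x. x^k * exp (P a b x)) \<in> borel_measurable lborel" by measurable
  have "norm (x^k * exp (P a b x)) \<le> norm (\<bar>x\<bar>^k * exp (P a b x))" for x :: real
    by (simp add: abs_mult power_abs)
  then show ?thesis by (intro Bochner_Integration.integrable_bound[OF integrable_abs_E m] AE_I2)
qed

lemma tendsto_E: "((\<lambda>x. x^k * exp (P a b x)) \<longlongrightarrow> 0) at_top"
    "((\<lambda>x. x^k * exp (P a b x)) \<longlongrightarrow> 0) at_bot"
proof -
  have b: "norm (x^k * exp (P a b x)) \<le> exp (\<bar>a\<bar>*(\<bar>a\<bar>+(\<bar>b\<bar> + real k + 1)+1)^2 + (\<bar>b\<bar> + real k + 1)*(\<bar>a\<bar>+(\<bar>b\<bar> + real k + 1)+1)) * inverse (1 + x^2)" for x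
    using key_bound[of x k a b] by (simp add: abs_mult power_abs)
  have "((\<lambda>x::real. inverse (1 + x^2)) \<longlongrightarrow> 0) at_top" by real_asymp
  then show "((\<lambda>x. x^k * exp (P a b x)) \<longlongrightarrow> 0) at_top"
    by (intro Lim_null_comparison[OF always_eventually[OF allI[OF b]]]) (auto intro: tendsto_mult_right_zero)
  have "((\<lambda>x::real. inverse (1 + x^2)) \<longlongrightarrow> 0) at_bot" by real_asymp
  then show "((\<lambda>x. x^k * exp (P a b x)) \<longlongrightarrow> 0) at_bot"
    by (intro Lim_null_comparison[OF always_eventually[OF allI[OF b]]]) (auto intro: tendsto_mult_right_zero)
qed

lemma deriv_param:
  fixes g \<psi> :: "real \<Rightarrow> real" and s :: real
  assumes psi: "\<And>x. 0 \<le> \<psi> x"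
  and I0: "\<And>s. integrable lborel (\<lambda>x. g x * exp (s * \<psi> x))"
  and I1: "integrable lborel (\<lambda>x. g x * \<psi> x * exp (s * \<psi> x))"
  and I2: "integrable lborel (\<lambda>x. \<bar>g x\<bar> * \<psi> x ^ 2 * exp ((s + 1) * \<psi> x))"
  shows "((\<lambda>s. \<integral>x. g x * exp (s * \<psi> x) \<partial>lborel) has_real_derivative
           (\<integral>x. g x * \<psi> x * exp (s * \<psi> x) \<partial>lborel)) (at s)"
proof -
  define F where "F = (\<lambda>s. \<integral>x. g x * exp (s * \<psi> x) \<partial>lborel)"
  define D where "D = (\<integral>x. g x * \<psi> x * exp (s * \<psi> x) \<partial>lborel)"
  define K where "K = (\<integral>x. \<bar>g x\<bar> * \<psi> x ^ 2 * exp ((s + 1) * \<psi> x) \<partial>lborel)"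
  have bound: "\<bar>F (s + h) - F s - h * D\<bar> \<le> h^2 * K" if h: "\<bar>h\<bar> \<le> 1" for h
  proof -
    define d where "d = (\<lambda>x. g x * exp ((s + h) * \<psi> x) - g x * exp (s * \<psi> x) - h * (g x * \<psi> x * exp (s * \<psi> x)))"
    have di: "integrable lborel d" unfolding d_def
      using I0 I1 by (intro Bochner_Integration.integrable_diff integrable_mult_right) auto
    have "F (s + h) - F s - h * D = (\<integral>x. d x \<partial>lborel)"
      unfolding d_def F_def D_def using I0 I1
      by (simp add: Bochner_Integration.integral_diff integrable_mult_right)
    also have "\<bar>\<dots>\<bar> \<le> (\<integral>x. norm (d x) \<partial>lborel)"
      using integral_norm_bound[of lborel d] by (simp add: real_norm_def)
    also have "\<dots> \<le> (\<integral>x. h^2 * (\<bar>g x\<bar> * \<psi> x ^ 2 * exp ((s + 1) * \<psi> x)) \<partial>lborel)"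
    proof (rule integral_mono)
      show "integrable lborel (\<lambda>x. norm (d x))" using di by (rule integrable_norm)
      show "integrable lborel (\<lambda>x. h^2 * (\<bar>g x\<bar> * \<psi> x ^ 2 * exp ((s + 1) * \<psi> x)))"
        using I2 by (rule integrable_mult_right)
      fix x
      have e: "d x = g x * exp (s * \<psi> x) * (exp (h * \<psi> x) - 1 - h * \<psi> x)"
        unfolding d_def by (simp add: algebra_simps distrib_right flip: exp_add)
      have "norm (d x) = \<bar>g x\<bar> * exp (s * \<psi> x) * \<bar>exp (h * \<psi> x) - 1 - h * \<psi> x\<bar>"
        unfolding e by (simp add: abs_mult)
      also have "\<dots> \<le> \<bar>g x\<bar> * exp (s * \<psi> x) * ((h * \<psi> x)^2 * exp \<bar>h * \<psi> x\<bar>)"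
        by (intro mult_left_mono exp_taylor2_bound) auto
      also have "\<dots> \<le> \<bar>g x\<bar> * exp (s * \<psi> x) * ((h * \<psi> x)^2 * exp (\<psi> x))"
      proof -
        have "\<bar>h * \<psi> x\<bar> \<le> \<psi> x" using h psi[of x]
          by (simp add: abs_mult) (metis mult_left_le_one_le abs_ge_zero mult.commute)
        then show ?thesis by (intro mult_left_mono) auto
      qed
      also have "\<dots> = h^2 * (\<bar>g x\<bar> * \<psi> x ^ 2 * exp ((s + 1) * \<psi> x))"
        by (simp add: algebra_simps power_mult_distrib distrib_right flip: exp_add)
      finally show "norm (d x) \<le> h^2 * (\<bar>g x\<bar> * \<psi> x ^ 2 * exp ((s + 1) * \<psi> x))" .
    qed
    also have "\<dots> = h^2 * K" unfolding K_def by simp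
    finally show ?thesis .
  qed
  have ev: "eventually (\<lambda>h. h \<noteq> 0 \<and> \<bar>h\<bar> < 1) (at (0::real))"
    unfolding eventually_at by (intro exI[of _ 1]) auto
  have "((\<lambda>h. (F (s + h) - F s) / h - D) \<longlongrightarrow> 0) (at 0)"
  proof (rule Lim_null_comparison)
    show "eventually (\<lambda>h. norm ((F (s + h) - F s) / h - D) \<le> \<bar>h\<bar> * K) (at 0)"
      using ev
    proof (rule eventually_mono)
      fix h :: real assume h: "h \<noteq> 0 \<and> \<bar>h\<bar> < 1"
      have "(F (s + h) - F s) / h - D = (F (s + h) - F s - h * D) / h"
        using h by (simp add: field_simps)
      hence "norm ((F (s + h) - F s) / h - D) = \<bar>F (s + h) - F s - h * D\<bar> / \<bar>h\<bar>"
        by simp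
      also have "\<dots> \<le> h^2 * K / \<bar>h\<bar>" using bound[of h] h by (intro divide_right_mono) auto
      also have "\<dots> = \<bar>h\<bar> * K" using h by (simp add: power2_eq_square abs_mult_self field_simps)
      finally show "norm ((F (s + h) - F s) / h - D) \<le> \<bar>h\<bar> * K" .
    qed
    show "((\<lambda>h. \<bar>h\<bar> * K) \<longlongrightarrow> 0) (at 0)"
      by (auto intro!: tendsto_eq_intros)
  qed
  then have "((\<lambda>h. (F (s + h) - F s) / h) \<longlongrightarrow> D) (at 0)"
    by (simp add: LIM_zero_iff)
  then show ?thesis unfolding DERIV_def F_def D_def .
qed

definition E :: "nat \<Rightarrow> real \<Rightarrow> real \<Rightarrow> real" where
  "E k a b = (\<integral>x. x ^ k * exp (P a b x) \<partial>lborel)"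

lemma exp_P_a: "exp (P a b x) = exp (P 0 b x) * exp (a * x^4)"
  unfolding P_def by (simp flip: exp_add)
lemma exp_P_b: "exp (P a b x) = exp (P a 0 x) * exp (b * x^2)"
  unfolding P_def by (simp flip: exp_add)

lemma dE_a: "((\<lambda>s. E k s b) has_real_derivative E (k + 4) a b) (at a)"
proof -
  define g where "g = (\<lambda>x::real. x ^ k * exp (P 0 b x))"
  have eq0: "g x * exp (s * x^4) = x^k * exp (P s b x)" for x s
    unfolding g_def exp_P_a[of s b x] by simp
  have eq1: "g x * x^4 * exp (s * x^4) = x^(k+4) * exp (P s b x)" for x s
    unfolding g_def exp_P_a[of s b x] by (simp add: power_add)
  have eq2: "\<bar>g x\<bar> * (x^4)^2 * exp ((s+1) * x^4) = \<bar>x\<bar>^(k+8) * exp (P (s+1) b x)" for x s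
    unfolding g_def exp_P_a[of "s+1" b x] by (simp add: power_add abs_mult power_abs flip: power_mult)
  have "((\<lambda>s. \<integral>x. g x * exp (s * x^4) \<partial>lborel) has_real_derivative
           (\<integral>x. g x * x^4 * exp (a * x^4) \<partial>lborel)) (at a)"
    by (rule deriv_param) (simp_all only: eq0 eq1 eq2 integrable_E integrable_abs_E zero_le_power_eq_numeral, simp_all)
  then show ?thesis unfolding E_def eq0 eq1 .
qed

lemma dE_b: "((\<lambda>s. E k a s) has_real_derivative E (k + 2) a b) (at b)"
proof -
  define g where "g = (\<lambda>x::real. x ^ k * exp (P a 0 x))"
  have eq0: "g x * exp (s * x^2) = x^k * exp (P a s x)" for x s
    unfolding g_def exp_P_b[of a s x] by simp
  have eq1: "g x * x^2 * exp (s * x^2) = x^(k+2) * exp (P a s x)" for x s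
    unfolding g_def exp_P_b[of a s x] by (simp add: power_add power2_eq_square mult_ac)
  have eq2: "\<bar>g x\<bar> * (x^2)^2 * exp ((s+1) * x^2) = \<bar>x\<bar>^(k+4) * exp (P a (s+1) x)" for x s
  proof -
    have h4: "(x^2)^2 = \<bar>x\<bar>^4"
    proof -
      have "(x^2)^2 = (\<bar>x\<bar>^2)^2" by simp
      also have "\<dots> = \<bar>x\<bar>^4" by (simp flip: power_mult)
      finally show ?thesis .
    qed
    show ?thesis unfolding g_def exp_P_b[of a "s+1" x] h4 by (simp add: power_add abs_mult power_abs)
  qed
  have "((\<lambda>s. \<integral>x. g x * exp (s * x^2) \<partial>lborel) has_real_derivative
           (\<integral>x. g x * x^2 * exp (b * x^2) \<partial>lborel)) (at b)"
    by (rule deriv_param) (simp_all only: eq0 eq1 eq2 integrable_E integrable_abs_E, simp_all)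
  then show ?thesis unfolding E_def eq0 eq1 .
qed

lemma lin4:
  fixes f0 f1 f2 f3 :: "'a \<Rightarrow> real"
  assumes "integrable M f0" "integrable M f1" "integrable M f2" "integrable M f3"
  shows "(\<integral>x. c0 * f0 x - c1 * f1 x + c2 * f2 x + c3 * f3 x \<partial>M)
    = c0 * integral\<^sup>L M f0 - c1 * integral\<^sup>L M f1 + c2 * integral\<^sup>L M f2 + c3 * integral\<^sup>L M f3"
  using assms by (simp add: Bochner_Integration.integral_diff Bochner_Integration.integral_add
      Bochner_Integration.integrable_diff Bochner_Integration.integrable_add integrable_mult_right)

lemma ibp: "real (2*n+1) * E (2*n) a b - 6 * E (2*n+6) a b + 4 * a * E (2*n+4) a b + 2 * b * E (2*n+2) a b = 0"
proof -
  define e where "e = (\<lambda>k x. x ^ k * exp (P a b x))"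
  define f where "f = (\<lambda>x. real (2*n+1) * e (2*n) x - 6 * e (2*n+6) x + 4 * a * e (2*n+4) x + 2 * b * e (2*n+2) x)"
  define F where "F = e (2*n+1)"
  have fi: "integrable lborel f" unfolding f_def e_def
    by (intro Bochner_Integration.integrable_diff Bochner_Integration.integrable_add integrable_mult_right integrable_E)
  have dP: "((\<lambda>x. P a b x) has_real_derivative (- 6 * x^5 + 4 * a * x^3 + 2 * b * x)) (at x)" for x
    unfolding P_def by (auto intro!: derivative_eq_intros)
  have dF: "(F has_real_derivative f x) (at x)" for x
  proof -
    have p6: "x^(2*n+6) = x^(2*n+1) * x^5"
    proof -
      have "2*n+6 = (2*n+1)+5" by simp
      then show ?thesis by (simp only: power_add)
    qed
    have p4: "x^(2*n+4) = x^(2*n+1) * x^3"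
    proof -
      have "2*n+4 = (2*n+1)+3" by simp
      then show ?thesis by (simp only: power_add)
    qed
    have p2: "x^(2*n+2) = x^(2*n+1) * x"
    proof -
      have "2*n+2 = Suc (2*n+1)" by simp
      then show ?thesis by (simp only: power_Suc2)
    qed
    have p1: "x^(2*n+1) = x^(2*n) * x" by simp
    show ?thesis unfolding F_def e_def
      by (rule DERIV_cong[OF DERIV_mult[OF DERIV_pow DERIV_chain2[OF DERIV_exp dP]]])
         (unfold f_def e_def p6 p4 p2, simp add: p1 algebra_simps)
  qed
  have cf: "isCont f x" for x unfolding f_def e_def P_def by (intro continuous_intros)
  have "(LBINT x=-\<infinity>..\<infinity>. f x) = 0 - 0"
  proof (rule interval_integral_FTC_integrable[where F = F])
    show "(F has_vector_derivative f x) (at x)" for x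
      using dF[of x] by (simp add: has_real_derivative_iff_has_vector_derivative)
    show "set_integrable lborel (einterval (-\<infinity>) \<infinity>) f"
      using fi by (simp add: set_integrable_def)
    show "((F \<circ> real_of_ereal) \<longlongrightarrow> 0) (at_right (-\<infinity>))"
      unfolding ereal_tendsto_simps F_def e_def by (rule tendsto_E)
    show "((F \<circ> real_of_ereal) \<longlongrightarrow> 0) (at_left \<infinity>)"
      unfolding ereal_tendsto_simps F_def e_def by (rule tendsto_E)
  qed (auto intro: cf)
  then have "(\<integral>x. f x \<partial>lborel) = 0"
    by (simp add: interval_lebesgue_integral_def set_lebesgue_integral_def)
  moreover have "(\<integral>x. f x \<partial>lborel) = real (2*n+1) * E (2*n) a b - 6 * E (2*n+6) a b + 4 * a * E (2*n+4) a b + 2 * b * E (2*n+2) a b"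
  proof -
    have Ee: "E k a b = integral\<^sup>L lborel (e k)" for k unfolding E_def e_def ..
    have ie: "integrable lborel (e k)" for k unfolding e_def by (rule integrable_E)
    show ?thesis unfolding f_def Ee by (rule lin4[OF ie ie ie ie])
  qed
  ultimately show ?thesis by simp
qed

lemma final_alg:
  fixes r e0 e2 e4 e6 a b :: real
  assumes "r * e0 - 6 * e6 + 4 * a * e4 + 2 * b * e2 = 0"
  shows "e6 - 2/3 * a * e4 - 1/3 * b * e2 - 1/6 * r * e0 = 0"
proof -
  have "e6 - 2/3 * a * e4 - 1/3 * b * e2 - 1/6 * r * e0 = - (1/6) * (r * e0 - 6 * e6 + 4 * a * e4 + 2 * b * e2)"
    by (simp add: algebra_simps)
  then show ?thesis using assms by simp
qed

theorem lemma5p6: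
  fixes n :: nat and \<tau> t :: real
  shows "(\<lambda>s. mu n s t) differentiable (at \<tau>)
    \<and> (\<lambda>s. mu n \<tau> s) differentiable (at t)
    \<and> (\<lambda>s. deriv (\<lambda>u. mu n s u) t) differentiable (at \<tau>)
    \<and> deriv (\<lambda>s. deriv (\<lambda>u. mu n s u) t) \<tau>
        - 2/3 * \<tau> * deriv (\<lambda>s. mu n s t) \<tau>
        - 1/3 * t * deriv (\<lambda>u. mu n \<tau> u) t
        - 1/6 * (2 * real n + 1) * mu n \<tau> t = 0"
proof -
  have mu_E: "mu n a b = E (2*n) a b" for a b unfolding mu_def E_def P_def ..
  have d1: "((\<lambda>s. mu n s t) has_real_derivative E (2*n+4) \<tau> t) (at \<tau>)"
    unfolding mu_E by (rule dE_a)
  have d2: "((\<lambda>s. mu n a s) has_real_derivative E (2*n+2) a b) (at b)" for a b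
    unfolding mu_E by (rule dE_b)
  have dd: "deriv (\<lambda>u. mu n s u) t = E (2*n+2) s t" for s
    by (rule DERIV_imp_deriv[OF d2])
  have d3: "((\<lambda>s. deriv (\<lambda>u. mu n s u) t) has_real_derivative E (2*n+6) \<tau> t) (at \<tau>)"
  proof -
    have e6: "2*n+2+4 = 2*n+6" by simp
    show ?thesis unfolding dd using dE_a[of "2*n+2" t \<tau>] unfolding e6 .
  qed
  have id: "real (2*n+1) * E (2*n) \<tau> t - 6 * E (2*n+6) \<tau> t + 4 * \<tau> * E (2*n+4) \<tau> t + 2 * t * E (2*n+2) \<tau> t = 0"
    by (rule ibp)
  show ?thesis
  proof (intro conjI)
    show "(\<lambda>s. mu n s t) differentiable (at \<tau>)"
      by (rule differentiableI[OF has_field_derivative_imp_has_derivative[OF d1]])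
    show "(\<lambda>s. mu n \<tau> s) differentiable (at t)"
      by (rule differentiableI[OF has_field_derivative_imp_has_derivative[OF d2]])
    show "(\<lambda>s. deriv (\<lambda>u. mu n s u) t) differentiable (at \<tau>)"
      by (rule differentiableI[OF has_field_derivative_imp_has_derivative[OF d3]])
    have h1: "deriv (\<lambda>s. deriv (\<lambda>u. mu n s u) t) \<tau> = E (2*n+6) \<tau> t" by (rule DERIV_imp_deriv[OF d3])
    have h2: "deriv (\<lambda>s. mu n s t) \<tau> = E (2*n+4) \<tau> t" by (rule DERIV_imp_deriv[OF d1])
    have h3: "deriv (\<lambda>u. mu n \<tau> u) t = E (2*n+2) \<tau> t" by (rule dd)
    have h4: "mu n \<tau> t = E (2*n) \<tau> t" by (rule mu_E)
    have id': "(2 * real n + 1) * E (2*n) \<tau> t - 6 * E (2*n+6) \<tau> t + 4 * \<tau> * E (2*n+4) \<tau> t + 2 * t * E (2*n+2) \<tau> t = 0"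
      using id by (simp add: add.commute)
    show "deriv (\<lambda>s. deriv (\<lambda>u. mu n s u) t) \<tau>
        - 2/3 * \<tau> * deriv (\<lambda>s. mu n s t) \<tau>
        - 1/3 * t * deriv (\<lambda>u. mu n \<tau> u) t
        - 1/6 * (2 * real n + 1) * mu n \<tau> t = 0"
      unfolding h1 h2 h3 h4 by (rule final_alg[OF id'])
  qed
qed

end
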